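(* Under the standing setup, let $u\in\widetilde X$. If $u\in\overline X$, then $\|\beta(u)-\beta(v)\|\le3\|u-v\|^{1/2}$ for all $v\in B(u,1)\cap\widetilde X$. If $u\notin\overline X$, set $r_u=\min\{1,\frac{\varepsilon\|u-u_{NN}\|}{480}\}$ and $\widetilde C_u=\frac1\varepsilon\max\{1200,\,480+128\|u-u_{NN}\|^{1/2}\}$; then \[\|\beta(u)-\beta(v)\|\le\widetilde C_u\|u-v\|^{1/2}\quad\forall\,v\in B(u,r_u)\cap\widetilde X.\]
   Context: Norms are Euclidean; $B(x,r)$ is the open ball; $\overline X$ is the closure. Standing setup: $X\subseteq\mathbb{R}^d$ has reach $\tau_X>0$, where $\tau_X=\sup\{t\ge0:\text{every }x\text{ with }d(x,X)<t\text{ has a unique closest point in }\overline X\}$; $\widetilde X=X+B(0,\tau_X/2)$; for $u\in\widetilde X$, $u_{NN}$ is the unique closest point to $u$ in $\overline X$, and it is a known fact that $\|u_{NN}-v_{NN}\|\le2\|u-v\|$ for all $u,v\in\widetilde X$. $\varepsilon\in(0,1)$. $S_X=\overline{\{(x-y)/\|x-y\|:x\ne y\in X\}}$. A linear $\Pi\colon\mathbb{R}^d\to\mathbb{R}^m$ provides $\eta$-convex hull distortion for $T\subseteq S^{d-1}$ if $|\,\|\Pi x\|-\|x\|\,|<\eta$ for all $x\in\operatorname{conv}(T)$. $\mathcal C=\{w_1,\ldots,w_\ell\}\subseteq S_X$ is finite with every $v\in S_X$ within distance $<\varepsilon/40$ of some $w_i$; $\Pi\in\mathbb{R}^{m\times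 d}$ provides $\frac{\varepsilon}{240}$-convex hull distortion for $S_X$. For $z\in\mathbb{R}^m$, $u\in\widetilde X$, $i=1,\ldots,\ell$: $\tilde g_i(z,u)=\langle z,\Pi w_i\rangle-\langle u-u_{NN},w_i\rangle-\frac{\varepsilon}{30}\|u-u_{NN}\|$, $\tilde g_{\ell+i}(z,u)=\langle u-u_{NN},w_i\rangle-\langle z,\Pi w_i\rangle-\frac{\varepsilon}{30}\|u-u_{NN}\|$; $\widetilde F_u=\{z:\tilde g_i(z,u)\le0,\ i=1,\ldots,2\ell\}$ (nonempty, closed, convex); $\beta(u)=\arg\min_{z\in\widetilde F_u}\|z\|$. *)

theory Defs
  imports "HOL-Analysis.Analysis"
begin

definition reach :: "'a::euclidean_space set \<Rightarrow> ereal" where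
  "reach X = Sup {ereal t | t. t \<ge> 0 \<and>
      (\<forall>x. infdist x X < t \<longrightarrow> (\<exists>!p. p \<in> closure X \<and> dist x p = infdist x X))}"

definition tube :: "'a::euclidean_space set \<Rightarrow> 'a set" where
  "tube X = {u. \<exists>x\<in>X. ereal (2 * dist u x) < reach X}"

definition nnp :: "'a::euclidean_space set \<Rightarrow> 'a \<Rightarrow> 'a" where
  "nnp X u = (THE p. p \<in> closure X \<and> dist u p = infdist u X)"

definition secants :: "'a::euclidean_space set \<Rightarrow> 'a set" where
  "secants X = closure {(x - y) /\<^sub>R norm (x - y) | x y. x \<in> X \<and> y \<in> X \<and> x \<noteq> y}"

definition conv_hull_distortion :: "('a::euclidean_space \<Rightarrow> 'b::euclidean_space) \<Rightarrow> real \<Rightarrow> 'a set \<Rightarrow> bool" where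
  "conv_hull_distortion Pm eta T \<longleftrightarrow> (\<forall>x \<in> convex hull T. \<bar>norm (Pm x) - norm x\<bar> < eta)"

text \<open>The feasible set F~_u, for the net w_0, ..., w_(l-1) (indices shifted to start at 0).
  The constraints g~_i and g~_(l+i) are written out.\<close>
definition Ftil :: "'a::euclidean_space set \<Rightarrow> ('a \<Rightarrow> 'b::euclidean_space) \<Rightarrow> (nat \<Rightarrow> 'a) \<Rightarrow> nat
    \<Rightarrow> real \<Rightarrow> 'a \<Rightarrow> 'b set" where
  "Ftil X Pm w l eps u = {z. \<forall>i<l.
      inner z (Pm (w i)) - inner (u - nnp X u) (w i) - eps / 30 * norm (u - nnp X u) \<le> 0 \<and>
      inner (u - nnp X u) (w i) - inner z (Pm (w i)) - eps / 30 * norm (u - nnp X u) \<le> 0}"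

definition beta :: "'a::euclidean_space set \<Rightarrow> ('a \<Rightarrow> 'b::euclidean_space) \<Rightarrow> (nat \<Rightarrow> 'a) \<Rightarrow> nat
    \<Rightarrow> real \<Rightarrow> 'a \<Rightarrow> 'b" where
  "beta X Pm w l eps u = (THE z. z \<in> Ftil X Pm w l eps u \<and>
      (\<forall>z' \<in> Ftil X Pm w l eps u. norm z \<le> norm z'))"

end

theory Submission
  imports Defs
begin



lemma nnp_props:
  assumes "u \<in> tube X"
  shows "nnp X u \<in> closure X" "dist u (nnp X u) = infdist u X"
proof -
  obtain x where x: "x \<in> X" "ereal (2 * dist u x) < reach X"
    using assms unfolding tube_def by auto
  have "infdist u X \<le> 2 * dist u x" using infdist_le[OF x(1), of u] zero_le_dist[of u x] by linarith
  then have "ereal (infdist u X) < reach X" using x(2) by (meson ereal_less_eq(3) order_le_less_trans)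
  then obtain y where y: "y \<in> {ereal t | t. t \<ge> 0 \<and>
      (\<forall>x. infdist x X < t \<longrightarrow> (\<exists>!p. p \<in> closure X \<and> dist x p = infdist x X))}" "ereal (infdist u X) < y"
    unfolding reach_def by (auto simp: less_Sup_iff)
  then have ex: "\<exists>!p. p \<in> closure X \<and> dist u p = infdist u X" by auto
  have "nnp X u \<in> closure X \<and> dist u (nnp X u) = infdist u X"
    unfolding nnp_def by (rule theI'[OF ex])
  then show "nnp X u \<in> closure X" "dist u (nnp X u) = infdist u X" by auto
qed



definition FF :: "('a::euclidean_space \<Rightarrow> 'b::euclidean_space) \<Rightarrow> (nat \<Rightarrow> 'a) \<Rightarrow> nat \<Rightarrow> real \<Rightarrow> 'a \<Rightarrow> 'b set" where
  "FF Pm w l c n = {z. \<forall>i<l. \<bar>inner z (Pm (w i)) - inner n (w i)\<bar> \<le> c}"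

lemma Ftil_FF: "Ftil X Pm w l eps u = FF Pm w l (eps/30 * norm (u - nnp X u)) (u - nnp X u)"
proof -
  have "\<And>a b c::real. (a - b - c \<le> 0 \<and> b - a - c \<le> 0) = (\<bar>a - b\<bar> \<le> c)" by auto
  then show ?thesis unfolding Ftil_def FF_def by presburger
qed

lemma FF_eq: "FF Pm w l c n = (\<Inter>i\<in>{..<l}. {z. inner (Pm (w i)) z \<le> c + inner n (w i)} \<inter> {z. inner (Pm (w i)) z \<ge> inner n (w i) - c})"
  unfolding FF_def by (auto simp: abs_le_iff inner_commute) (smt (verit) lessThan_iff)+

lemma FF_closed: "closed (FF Pm w l c n)"
  unfolding FF_eq by (intro closed_INT closed_Int ballI closed_halfspace_le closed_halfspace_ge)

lemma FF_convex: "convex (FF Pm w l c n)"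
  unfolding FF_eq by (intro convex_INT convex_Int convex_halfspace_le convex_halfspace_ge)

lemma FF_mono: "c \<le> c' \<Longrightarrow> FF Pm w l c n \<subseteq> FF Pm w l c' n"
  unfolding FF_def by auto

lemma the_min_norm:
  fixes F :: "'b::euclidean_space set"
  assumes "closed F" "convex F" "F \<noteq> {}"
  shows "(THE z. z \<in> F \<and> (\<forall>z'\<in>F. norm z \<le> norm z')) = closest_point F 0"
proof (rule the_equality)
  show "closest_point F 0 \<in> F \<and> (\<forall>z'\<in>F. norm (closest_point F 0) \<le> norm z')"
    using closest_point_exists[OF assms(1,3), of 0] by (simp add: dist_norm)
next
  fix z assume "z \<in> F \<and> (\<forall>z'\<in>F. norm z \<le> norm z')"
  then show "z = closest_point F 0"
    by (intro closest_point_unique[OF assms(2,1)]) (auto simp: dist_norm)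
qed

lemma closest_le:
  fixes F :: "'b::euclidean_space set"
  assumes "closed F" "x \<in> F"
  shows "norm (closest_point F 0) \<le> norm x"
  using closest_point_le[OF assms, of 0] by (simp add: dist_norm)

lemma proj_stab:
  fixes F1 F2 :: "'b::euclidean_space set"
  assumes c: "closed F1" "closed F2" "convex F2"
    and z': "z' \<in> F2" "norm (z' - closest_point F1 0) \<le> d"
    and z'': "z'' \<in> F1" "norm (z'' - closest_point F2 0) \<le> d"
    and R: "norm (closest_point F1 0) \<le> R" "norm (closest_point F2 0) \<le> R"
  shows "norm (closest_point F1 0 - closest_point F2 0) \<le> d + sqrt (4*d*(2*R+d))"
proof -
  define c1 where "c1 = closest_point F1 0"
  define c2 where "c2 = closest_point F2 0"
  have F1ne: "F1 \<noteq> {}" "F2 \<noteq> {}" using z' z'' by auto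
  have c2in: "c2 \<in> F2" unfolding c2_def using closest_point_exists[OF c(2) F1ne(2)] by auto
  have d0: "d \<ge> 0" using z'(2) norm_ge_zero order_trans by blast
  have n1: "norm c1 \<le> norm z''" unfolding c1_def by (rule closest_le[OF c(1) z''(1)])
  have n2: "norm c2 \<le> norm z'" unfolding c2_def by (rule closest_le[OF c(2) z'(1)])
  define m where "m = (1/2) *\<^sub>R c2 + (1/2) *\<^sub>R z'"
  have "m \<in> F2" unfolding m_def using c(3) c2in z'(1) by (intro convexD) auto
  then have nm: "norm c2 \<le> norm m" unfolding c2_def by (rule closest_le[OF c(2)])
  have par: "norm (c2 - z')^2 = 2 * norm c2 ^2 + 2 * norm z'^2 - 4 * norm m ^2"
    unfolding m_def power2_norm_eq_inner
    by (simp add: inner_diff_left inner_diff_right inner_add_left inner_add_right inner_commute algebra_simps)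
  have "norm c2 ^2 \<le> norm m ^2" using nm by (simp add: power_mono)
  then have A: "norm (c2 - z')^2 \<le> 2 * ((norm z' - norm c2) * (norm z' + norm c2))"
    using par by (simp add: algebra_simps power2_eq_square)
  have z'le: "norm z' \<le> norm c1 + d" using z'(2) norm_triangle_sub[of z' c1] unfolding c1_def
    by (smt (verit) norm_minus_commute norm_triangle_ineq2)
  have z''le: "norm z'' \<le> norm c2 + d" using z''(2) unfolding c2_def
    by (smt (verit) norm_triangle_ineq2)
  have B: "(norm z' - norm c2) * (norm z' + norm c2) \<le> (2*d) * (2*R+d)"
  proof (cases "norm z' - norm c2 \<le> 0")
    case True
    then have "(norm z' - norm c2) * (norm z' + norm c2) \<le> 0"
      by (simp add: mult_nonpos_nonneg)
    also have "0 \<le> (2*d) * (2*R+d)" using d0 R norm_ge_zero[of "closest_point F1 0"]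
      by (intro mult_nonneg_nonneg) linarith+
    finally show ?thesis .
  next
    case False
    show ?thesis
      using False d0 R z'le z''le n1 unfolding c1_def[symmetric] c2_def[symmetric]
      by (intro mult_mono) auto
  qed
  have "norm (c2 - z')^2 \<le> 4*d*(2*R+d)" using A B by linarith
  then have C: "norm (c2 - z') \<le> sqrt (4*d*(2*R+d))" by (simp add: real_le_rsqrt)
  have "norm (c1 - c2) \<le> norm (c1 - z') + norm (z' - c2)"
    using norm_triangle_ineq[of "c1 - z'" "z' - c2"] by simp
  also have "\<dots> \<le> d + sqrt (4*d*(2*R+d))" using C z'(2) unfolding c1_def
    by (simp add: norm_minus_commute)
  finally show ?thesis unfolding c1_def c2_def .
qed



lemma slack:
  fixes Pm :: "'a::euclidean_space \<Rightarrow> 'b::euclidean_space" and S :: "'a set" and n :: 'a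
  assumes lin: "linear Pm" and dist: "\<And>p. p \<in> convex hull S \<Longrightarrow> \<bar>norm (Pm p) - norm p\<bar> < e"
    and Sne: "S \<noteq> {}" and e0: "e \<ge> 0"
  shows "\<exists>z. norm z \<le> norm n \<and> (\<forall>p\<in>convex hull S. inner n p - inner z (Pm p) \<le> norm n * e)"
proof -
  define K where "K = norm n"
  define \<delta> where "\<delta> = norm n * e"
  have K0: "K \<ge> 0" and d0: "\<delta> \<ge> 0" unfolding K_def \<delta>_def using e0 by auto
  define f where "f = (\<lambda>p. (Pm p, inner n p))"
  have linf: "linear f" unfolding f_def
    using lin by (intro linearI) (auto simp: linear_add linear_scale inner_add_right prod_eq_iff)
  define G where "G = f ` (convex hull S)"
  define E where "E = {(y::'b, t::real). t > K * norm y + \<delta>}"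
  have cG: "convex G" unfolding G_def by (intro convex_linear_image linf convex_convex_hull)
  have key: "K * norm (a *\<^sub>R y1 + b *\<^sub>R y2) + \<delta> < a * t1 + b * t2"
    if h: "t1 > K * norm y1 + \<delta>" "t2 > K * norm y2 + \<delta>" "0 \<le> a" "0 \<le> b" "a + b = 1"
    for y1 y2 :: 'b and t1 t2 a b :: real
  proof -
    have "norm (a *\<^sub>R y1 + b *\<^sub>R y2) \<le> a * norm y1 + b * norm y2"
      using norm_triangle_ineq[of "a *\<^sub>R y1" "b *\<^sub>R y2"] h(3,4) by simp
    then have "K * norm (a *\<^sub>R y1 + b *\<^sub>R y2) \<le> a * (K * norm y1) + b * (K * norm y2)"
      using K0 by (simp add: mult_left_mono algebra_simps) (metis mult_left_mono K0 distrib_left mult.left_commute)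
    define m where "m = min (t1 - (K * norm y1 + \<delta>)) (t2 - (K * norm y2 + \<delta>))"
    have m0: "m > 0" unfolding m_def using h by simp
    have ge: "a * (t1 - (K * norm y1 + \<delta>)) + b * (t2 - (K * norm y2 + \<delta>)) \<ge> a * m + b * m"
      using h unfolding m_def by (intro add_mono mult_left_mono) auto
    have amb: "a * m + b * m = m" using h(5) by (metis distrib_right mult_1)
    have "a * t1 + b * t2 > a * (K * norm y1) + b * (K * norm y2) + \<delta>"
    proof -
      have "a * (t1 - (K * norm y1 + \<delta>)) + b * (t2 - (K * norm y2 + \<delta>)) = a * t1 + b * t2 - (a * (K * norm y1) + b * (K * norm y2) + (a + b) * \<delta>)"
        by (simp add: algebra_simps)
      then show ?thesis using m0 h(5) amb ge by simp
    qed
    then have "a * t1 + b * t2 > K * norm (a *\<^sub>R y1 + b *\<^sub>R y2) + \<delta>"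
      using \<open>K * norm (a *\<^sub>R y1 + b *\<^sub>R y2) \<le> a * (K * norm y1) + b * (K * norm y2)\<close> by linarith
    then show "K * norm (a *\<^sub>R y1 + b *\<^sub>R y2) + \<delta> < a * t1 + b * t2" by simp
  qed
  have cE: "convex E" unfolding E_def convex_def by clarsimp (rule key; assumption)
  have Gne: "G \<noteq> {}" unfolding G_def using Sne by (simp add: convex_hull_eq_empty)
  have Ene: "E \<noteq> {}" proof -
    have "(0, \<delta> + 1) \<in> E" unfolding E_def by simp
    then show ?thesis by blast
  qed
  have disj: "G \<inter> E = {}"
  proof (rule ccontr)
    assume "G \<inter> E \<noteq> {}"
    then obtain p where p: "p \<in> convex hull S" "inner n p > K * norm (Pm p) + \<delta>"
      unfolding G_def E_def f_def by auto
    have "inner n p \<le> norm n * norm p" by (rule norm_cauchy_schwarz)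
    also have "\<dots> \<le> norm n * (norm (Pm p) + e)" using dist[OF p(1)]
      by (intro mult_left_mono) auto
    finally show False using p(2) unfolding K_def \<delta>_def by (simp add: algebra_simps)
  qed
  obtain a b where ab: "a \<noteq> 0" "\<forall>x\<in>G. inner a x \<le> b" "\<forall>x\<in>E. inner a x \<ge> b"
    using separating_hyperplane_sets[OF cG cE Gne Ene disj] by blast
  obtain a1 s where as: "a = (a1, s)" by (cases a)
  have Ei: "inner a1 y + s * t \<ge> b" if "t > K * norm y + \<delta>" for y t
    using ab(3) that unfolding E_def as by (auto simp: inner_Pair)
  have Gi: "inner a1 (Pm p) + s * inner n p \<le> b" if "p \<in> convex hull S" for p
    using ab(2) that unfolding G_def f_def as by (auto simp: inner_Pair)
  have s0: "s > 0"
  proof (rule ccontr)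
    assume "\<not> s > 0"
    show False
    proof (cases "s = 0")
      case True
      then have a1: "a1 \<noteq> 0" using ab(1) as by (auto simp: zero_prod_def)
      define T where "T = (\<bar>b\<bar> + 1) / (norm a1)^2"
      have "inner a1 (- T *\<^sub>R a1) = - T * (norm a1)^2" by (simp add: power2_norm_eq_inner)
      also have "\<dots> = - (\<bar>b\<bar> + 1)" unfolding T_def using a1 by simp
      finally have "inner a1 (- T *\<^sub>R a1) + s * (K * norm (- T *\<^sub>R a1) + \<delta> + 1) < b"
        using True by simp
      with Ei[of "- T *\<^sub>R a1" "K * norm (- T *\<^sub>R a1) + \<delta> + 1"] show False by simp
    next
      case False
      with \<open>\<not> s > 0\<close> have sn: "s < 0" by simp
      define t0 where "t0 = \<delta> + 1 + \<bar>b\<bar> / \<bar>s\<bar>"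
      have "s * t0 = s * (\<delta> + 1) + s * (\<bar>b\<bar> / \<bar>s\<bar>)" unfolding t0_def by (simp add: algebra_simps)
      also have "s * (\<bar>b\<bar> / \<bar>s\<bar>) = - \<bar>b\<bar>" using sn by simp
      also have "s * (\<delta> + 1) < 0" using sn d0 by (simp add: mult_neg_pos)
      finally have "s * t0 < b" by linarith
      moreover have "inner a1 0 + s * t0 \<ge> b" using Ei[of 0 t0] d0 unfolding t0_def
        by (simp add: add_pos_nonneg)
      ultimately show False by simp
    qed
  qed
  define z where "z = - (1/s) *\<^sub>R a1"
  have bs: "b / s \<le> \<delta>"
  proof (rule ccontr)
    assume "\<not> b / s \<le> \<delta>"
    define t where "t = (b / s + \<delta>) / 2"
    have "t > K * norm (0::'b) + \<delta>" unfolding t_def using \<open>\<not> b / s \<le> \<delta>\<close> by simp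
    then have "s * t \<ge> b" using Ei[of 0 t] by simp
    then have "t \<ge> b / s" using s0 by (simp add: field_simps)
    then have "2 * (b / s) \<le> b / s + \<delta>" unfolding t_def by (simp only: le_divide_eq_numeral1 mult.commute)
    then show False using \<open>\<not> b / s \<le> \<delta>\<close> by linarith
  qed
  have zK: "norm z \<le> K"
  proof (rule ccontr)
    assume zK: "\<not> norm z \<le> K"
    then have z0: "norm z > 0" using K0 by (cases "z = 0") auto
    define T where "T = (\<delta> + 2 - b / s) / (norm z * (norm z - K))"
    have T0: "T \<ge> 0" unfolding T_def using bs z0 zK by (intro divide_nonneg_pos) auto
    define y where "y = T *\<^sub>R z"
    define t where "t = K * norm y + \<delta> + 1"
    have "inner a1 y + s * t \<ge> b" using Ei[of y t] unfolding t_def by simp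
    moreover have "inner a1 y = - s * T * (norm z)^2"
      unfolding y_def z_def using s0 by (simp add: inner_commute power_divide field_simps power2_eq_square flip: power2_norm_eq_inner)
    moreover have "norm y = T * norm z" unfolding y_def using T0 by simp
    ultimately have "- s * T * (norm z)^2 + s * (K * (T * norm z) + \<delta> + 1) \<ge> b"
      unfolding t_def by simp
    then have "s * (\<delta> + 1 - T * norm z * (norm z - K)) \<ge> b"
      by (simp add: algebra_simps power2_eq_square)
    moreover have "T * norm z * (norm z - K) = \<delta> + 2 - b / s"
      unfolding T_def using z0 zK by (simp add: field_simps)
    ultimately have "s * (b / s - 1) \<ge> b" by simp
    then show False using s0 by (simp add: algebra_simps)
  qed
  show ?thesis
  proof (intro exI conjI ballI)
    show "norm z \<le> norm n" using zK K_def by simp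
    fix p assume p: "p \<in> convex hull S"
    have "inner a1 (Pm p) + s * inner n p \<le> b" by (rule Gi[OF p])
    then have "(inner a1 (Pm p) + s * inner n p) / s \<le> b / s"
      using s0 by (simp add: divide_right_mono)
    moreover have "inner n p - inner z (Pm p) = (inner a1 (Pm p) + s * inner n p) / s"
      unfolding z_def using s0 by (simp add: add_divide_distrib inner_commute)
    ultimately have "inner n p - inner z (Pm p) \<le> b / s" by simp
    then show "inner n p - inner z (Pm p) \<le> norm n * e" using bs \<delta>_def by simp
  qed
qed



lemma secants_neg:
  assumes "x \<in> secants X" shows "- x \<in> secants X"
proof -
  define A where "A = {(x - y) /\<^sub>R norm (x - y) | x y. x \<in> X \<and> y \<in> X \<and> x \<noteq> y}"
  have sA: "uminus ` A \<subseteq> A"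
  proof
    fix q assume "q \<in> uminus ` A"
    then obtain x y where "x \<in> X" "y \<in> X" "x \<noteq> y" "q = - ((x - y) /\<^sub>R norm (x - y))"
      unfolding A_def by auto
    then have "q = (y - x) /\<^sub>R norm (y - x)" "y \<noteq> x" by (auto simp: norm_minus_commute algebra_simps)
    then show "q \<in> A" unfolding A_def using \<open>x \<in> X\<close> \<open>y \<in> X\<close> by blast
  qed
  have "uminus ` closure A \<subseteq> closure (uminus ` A)"
    by (rule closure_linear_image_subset) (rule linear_uminus)
  also have "\<dots> \<subseteq> closure A" using sA by (rule closure_mono)
  finally show ?thesis using assms unfolding secants_def A_def[symmetric] by auto
qed

lemma secants_norm:
  assumes "x \<in> secants X" shows "norm x \<le> 1"
proof -
  have "secants X \<subseteq> cball 0 1" unfolding secants_def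
    by (rule closure_minimal) auto
  then show ?thesis using assms by auto
qed

lemma slack_FF:
  fixes Pm :: "'a::euclidean_space \<Rightarrow> 'b::euclidean_space"
  assumes lin: "linear Pm" and dist: "conv_hull_distortion Pm e (secants X)" and e0: "e \<ge> 0"
    and w_in: "\<And>i. i < l \<Longrightarrow> w i \<in> secants X"
  shows "\<exists>z. norm z \<le> norm n \<and> z \<in> FF Pm w l (norm n * e) n"
proof (cases "secants X = {}")
  case True
  then have "l = 0" using w_in by (metis empty_iff neq0_conv)
  then show ?thesis unfolding FF_def by (intro exI[of _ 0]) auto
next
  case False
  obtain z where z: "norm z \<le> norm n" "\<forall>p\<in>convex hull (secants X). inner n p - inner z (Pm p) \<le> norm n * e"
    using slack[OF lin _ False e0, of n] dist unfolding conv_hull_distortion_def by blast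
  have "z \<in> FF Pm w l (norm n * e) n" unfolding FF_def
  proof (clarify)
    fix i assume i: "i < l"
    have "w i \<in> convex hull (secants X)" "- w i \<in> convex hull (secants X)"
      using w_in[OF i] secants_neg[OF w_in[OF i]] by (auto intro: hull_inc)
    then have "inner n (w i) - inner z (Pm (w i)) \<le> norm n * e"
      "inner n (- w i) - inner z (Pm (- w i)) \<le> norm n * e" using z(2) by auto
    then show "\<bar>inner z (Pm (w i)) - inner n (w i)\<bar> \<le> norm n * e"
      using linear_neg[OF lin, of "w i"] by (simp add: abs_le_iff)
  qed
  then show ?thesis using z(1) by blast
qed

lemma move:
  fixes Pm :: "'a::euclidean_space \<Rightarrow> 'b::euclidean_space"
  assumes wn: "\<And>i. i < l \<Longrightarrow> norm (w i) \<le> 1"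
    and eps: "0 < eps" "eps < 1"
    and z: "z \<in> FF Pm w l (eps/30 * norm n1) n1" "norm z \<le> norm n1"
    and zs: "zs \<in> FF Pm w l (norm n1 * (eps/240)) n1" "norm zs \<le> norm n1"
    and d: "d \<ge> 0" "norm (n1 - n2) \<le> 3 * d" "120 * d \<le> eps * norm n1"
  shows "\<exists>z'\<in>FF Pm w l (eps/30 * norm n2) n2. norm (z' - z) \<le> 240 * d / eps"
proof -
  define N where "N = norm n1"
  have N0: "N > 0 \<or> d = 0" using d eps unfolding N_def by (cases "N > 0") (auto simp: N_def)
  define lam where "lam = (if N = 0 then 0 else 120 * d / (eps * N))"
  have lam: "0 \<le> lam" "lam \<le> 1" unfolding lam_def using d eps N_def
    by (auto simp: field_simps)
  have lamc: "lam * N = 120 * d / eps"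
    unfolding lam_def using N0 eps by (auto simp: field_simps)
  define z' where "z' = (1 - lam) *\<^sub>R z + lam *\<^sub>R zs"
  have "norm (z' - z) = lam * norm (zs - z)"
    unfolding z'_def using lam by (simp add: algebra_simps flip: scaleR_diff_right)
  also have "\<dots> \<le> lam * (2 * N)"
    using z(2) zs(2) lam norm_triangle_ineq4[of zs z] unfolding N_def
    by (intro mult_left_mono) auto
  also have "\<dots> = 2 * (lam * N)" by (simp add: algebra_simps)
  also have "\<dots> = 240 * d / eps" unfolding lamc by simp
  finally have close: "norm (z' - z) \<le> 240 * d / eps" .
  have n2: "norm n2 \<ge> N - 3 * d" using d(2) norm_triangle_ineq2[of n1 n2] unfolding N_def by linarith
  have "z' \<in> FF Pm w l (eps/30 * norm n2) n2" unfolding FF_def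
  proof clarify
    fix i assume i: "i < l"
    define a where "a = Pm (w i)"
    have h1: "\<bar>inner z a - inner n1 (w i)\<bar> \<le> eps/30 * N" using z(1) i unfolding FF_def a_def N_def by auto
    have h2: "\<bar>inner zs a - inner n1 (w i)\<bar> \<le> N * (eps/240)" using zs(1) i unfolding FF_def a_def N_def by auto
    have h3: "\<bar>inner (n1 - n2) (w i)\<bar> \<le> 3 * d"
    proof -
      have "norm (n1 - n2) * norm (w i) \<le> norm (n1 - n2)"
        using wn[OF i] by (simp add: mult_left_le)
      then show ?thesis using Cauchy_Schwarz_ineq2[of "n1 - n2" "w i"] d(2) by linarith
    qed
    have eq: "inner z' a - inner n2 (w i) = (1 - lam) * (inner z a - inner n1 (w i)) + lam * (inner zs a - inner n1 (w i)) + inner (n1 - n2) (w i)"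
      unfolding z'_def by (simp add: inner_add_left inner_diff_left algebra_simps)
    have "\<bar>inner z' a - inner n2 (w i)\<bar> \<le> (1 - lam) * (eps/30 * N) + lam * (N * (eps/240)) + 3 * d"
    proof -
      have a1: "\<bar>(1 - lam) * (inner z a - inner n1 (w i))\<bar> \<le> (1 - lam) * (eps/30 * N)"
        using h1 lam mult_left_mono[OF h1, of "1 - lam"] by (simp add: abs_mult)
      have a2: "\<bar>lam * (inner zs a - inner n1 (w i))\<bar> \<le> lam * (N * (eps/240))"
        using h2 lam mult_left_mono[OF h2, of lam] by (simp add: abs_mult)
      have tri: "\<bar>x + y + t\<bar> \<le> \<bar>x\<bar> + \<bar>y\<bar> + \<bar>t\<bar>" for x y t :: real by arith
      show ?thesis unfolding eq using tri[of "(1 - lam) * (inner z a - inner n1 (w i))" "lam * (inner zs a - inner n1 (w i))" "inner (n1 - n2) (w i)"] a1 a2 h3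
        by linarith
    qed
    also have "\<dots> = eps/30 * N - 7/8 * (eps / 30) * (lam * N) + 3 * d" by (simp add: field_simps)
    also have "\<dots> = eps/30 * N - 7/2 * d + 3 * d" unfolding lamc using eps by (simp add: field_simps)
    also have "\<dots> \<le> eps/30 * (N - 3 * d)" using eps d mult_left_mono[of eps 5 d] by (simp add: algebra_simps)
    also have "\<dots> \<le> eps/30 * norm n2" using n2 eps by (intro mult_left_mono) auto
    finally show "\<bar>inner z' (Pm (w i)) - inner n2 (w i)\<bar> \<le> eps / 30 * norm n2" unfolding a_def .
  qed
  then show ?thesis using close by blast
qed



lemma final_arith:
  fixes eps nu d :: real
  assumes eps: "0 < eps" "eps < 1" and nu: "nu > 0" and d: "0 \<le> d" "d < 1" "d < eps * nu / 480"
  shows "240*d/eps + sqrt (4*(240*d/eps)*(2*(2*nu) + 240*d/eps)) \<le> max 1200 (480 + 128 * sqrt nu) / eps * sqrt d"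
proof -
  define \<delta> where "\<delta> = 240*d/eps"
  have d0: "\<delta> \<ge> 0" unfolding \<delta>_def using d eps by simp
  have dnu: "\<delta> \<le> nu/2" unfolding \<delta>_def using d eps by (simp add: field_simps)
  have dsq: "d \<le> sqrt d" using d mult_left_le[of d d] by (intro real_le_rsqrt) (simp add: power2_eq_square)
  have A: "\<delta> \<le> 240 * sqrt d / eps" unfolding \<delta>_def using dsq eps by (simp add: divide_right_mono)
  have "4*\<delta>*(2*(2*nu) + \<delta>) \<le> 4*\<delta>*(9/2*nu)" using dnu d0 by (intro mult_left_mono) auto
  also have "\<dots> = 4320 * (nu * d) / eps" unfolding \<delta>_def by (simp add: field_simps)
  also have "\<dots> \<le> 4356 * (nu * d) / eps" using nu d eps by (intro divide_right_mono) auto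
  also have "\<dots> \<le> 4356 * (nu * d) / eps^2"
    using nu d eps by (intro divide_left_mono) (auto simp: power2_eq_square mult_le_cancel_left1)
  also have "\<dots> = (66 * sqrt nu * sqrt d / eps)^2" using nu d by (simp add: power_divide power_mult_distrib)
  finally have "sqrt (4*\<delta>*(2*(2*nu) + \<delta>)) \<le> 66 * sqrt nu * sqrt d / eps"
    using nu d eps by (intro real_le_lsqrt) auto
  then have "\<delta> + sqrt (4*\<delta>*(2*(2*nu) + \<delta>)) \<le> (240 + 66 * sqrt nu) / eps * sqrt d"
  proof -
    have "(240 + 66 * sqrt nu) / eps * sqrt d = 240 * sqrt d / eps + 66 * sqrt nu * sqrt d / eps"
      by (simp add: field_simps add_divide_distrib)
    then show ?thesis using A \<open>sqrt (4*\<delta>*(2*(2*nu) + \<delta>)) \<le> 66 * sqrt nu * sqrt d / eps\<close> by linarith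
  qed
  also have "\<dots> \<le> max 1200 (480 + 128 * sqrt nu) / eps * sqrt d"
    using eps d nu by (intro mult_right_mono divide_right_mono) auto
  finally show ?thesis unfolding \<delta>_def .
qed



theorem lemma4p1:
  fixes X :: "'a::euclidean_space set" and Pm :: "'a \<Rightarrow> 'b::euclidean_space"
    and w :: "nat \<Rightarrow> 'a" and l :: nat and eps :: real and u :: 'a
  assumes reach_pos: "reach X > 0"
    and nn_lip: "\<And>u v. u \<in> tube X \<Longrightarrow> v \<in> tube X \<Longrightarrow>
                   norm (nnp X u - nnp X v) \<le> 2 * norm (u - v)"
    and eps: "0 < eps" "eps < 1"
    and w_in: "\<And>i. i < l \<Longrightarrow> w i \<in> secants X"
    and w_net: "\<And>v. v \<in> secants X \<Longrightarrow> \<exists>i<l. norm (v - w i) < eps / 40"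
    and Pi_lin: "linear Pm"
    and Pi_dist: "conv_hull_distortion Pm (eps / 240) (secants X)"
    and u: "u \<in> tube X"
  shows "(u \<in> closure X \<longrightarrow>
            (\<forall>v \<in> ball u 1 \<inter> tube X.
               norm (beta X Pm w l eps u - beta X Pm w l eps v) \<le> 3 * sqrt (norm (u - v))))
       \<and> (u \<notin> closure X \<longrightarrow>
            (let r = min 1 (eps * norm (u - nnp X u) / 480);
                 C = max 1200 (480 + 128 * sqrt (norm (u - nnp X u))) / eps
             in \<forall>v \<in> ball u r \<inter> tube X.
                  norm (beta X Pm w l eps u - beta X Pm w l eps v) \<le> C * sqrt (norm (u - v))))"
proof -
  define N where "N x = x - nnp X x" for x
  define F where "F x = FF Pm w l (eps/30 * norm (N x)) (N x)" for x
  have wn: "\<And>i. i < l \<Longrightarrow> norm (w i) \<le> 1" using w_in secants_norm by blast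
  have slk: "\<exists>z. norm z \<le> norm (N x) \<and> z \<in> FF Pm w l (norm (N x) * (eps/240)) (N x)" for x
    using slack_FF[OF Pi_lin Pi_dist _ w_in] eps by simp
  have sub: "FF Pm w l (norm (N x) * (eps/240)) (N x) \<subseteq> F x" for x
    unfolding F_def using eps by (intro FF_mono) (simp add: mult_left_mono)
  have Fne: "F x \<noteq> {}" for x using slk[of x] sub[of x] by blast
  have beq: "beta X Pm w l eps x = closest_point (F x) 0" for x
    unfolding beta_def Ftil_FF F_def[symmetric] N_def[symmetric]
    by (rule the_min_norm[OF _ _ Fne]) (auto simp: F_def FF_closed FF_convex)
  have bin: "beta X Pm w l eps x \<in> F x" for x
    unfolding beq using closest_point_exists[OF _ Fne] by (simp add: F_def FF_closed)
  have bnorm: "norm (beta X Pm w l eps x) \<le> norm (N x)" for x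
  proof -
    obtain z where "norm z \<le> norm (N x)" "z \<in> F x" using slk[of x] sub[of x] by blast
    then show ?thesis unfolding beq using closest_le[of "F x" z] by (simp add: F_def FF_closed)
  qed
  have Nd: "norm (N x) = infdist x X" if "x \<in> tube X" for x
    using nnp_props(2)[OF that] unfolding N_def by (simp add: dist_norm)
  have Xne: "X \<noteq> {}" using u unfolding tube_def by auto
  show ?thesis
  proof (intro conjI impI)
    assume uc: "u \<in> closure X"
    have "infdist u X = 0" using uc in_closure_iff_infdist_zero[OF Xne] by simp
    then have "norm (N u) = 0" using Nd[OF u] by simp
    then have bu: "beta X Pm w l eps u = 0" using bnorm[of u] by simp
    show "\<forall>v \<in> ball u 1 \<inter> tube X.
               norm (beta X Pm w l eps u - beta X Pm w l eps v) \<le> 3 * sqrt (norm (u - v))"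
    proof
      fix v assume v: "v \<in> ball u 1 \<inter> tube X"
      have d1: "norm (u - v) < 1" using v by (simp add: dist_norm)
      have "norm (N v) \<le> infdist u X + dist v u" using Nd[of v] v infdist_triangle[of v X u] by simp
      then have "norm (beta X Pm w l eps v) \<le> norm (u - v)"
        using bnorm[of v] \<open>infdist u X = 0\<close> by (simp add: dist_norm norm_minus_commute)
      also have "\<dots> \<le> sqrt (norm (u - v))" using d1 mult_left_le[of "norm (u - v)" "norm (u - v)"]
        by (intro real_le_rsqrt) (simp add: power2_eq_square)
      also have "\<dots> \<le> 3 * sqrt (norm (u - v))" by simp
      finally show "norm (beta X Pm w l eps u - beta X Pm w l eps v) \<le> 3 * sqrt (norm (u - v))"
        using bu by simp
    qed
  next
    assume uc: "u \<notin> closure X"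
    define nu where "nu = norm (N u)"
    have nu0: "nu > 0"
    proof (rule ccontr)
      assume "\<not> nu > 0"
      then have "infdist u X = 0" using Nd[OF u] unfolding nu_def using infdist_nonneg[of u X] by simp
      then show False using uc in_closure_iff_infdist_zero[OF Xne] by simp
    qed
    show "let r = min 1 (eps * norm (u - nnp X u) / 480);
                 C = max 1200 (480 + 128 * sqrt (norm (u - nnp X u))) / eps
             in \<forall>v \<in> ball u r \<inter> tube X.
                  norm (beta X Pm w l eps u - beta X Pm w l eps v) \<le> C * sqrt (norm (u - v))"
      unfolding Let_def N_def[symmetric] nu_def[symmetric]
    proof
      fix v assume v: "v \<in> ball u (min 1 (eps * nu / 480)) \<inter> tube X"
      define d where "d = norm (u - v)"
      have d: "0 \<le> d" "d < 1" "d < eps * nu / 480" using v unfolding d_def by (auto simp: dist_norm)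
      have vt: "v \<in> tube X" using v by simp
      have nN: "norm (N u - N v) \<le> 3 * d"
      proof -
        have "N u - N v = (u - v) - (nnp X u - nnp X v)" unfolding N_def by simp
        then have "norm (N u - N v) \<le> norm (u - v) + norm (nnp X u - nnp X v)"
          using norm_triangle_ineq4 by metis
        then show ?thesis using nn_lip[OF u vt] unfolding d_def by linarith
      qed
      have nv: "norm (N v) \<ge> nu - 3 * d" "norm (N v) \<le> nu + 3 * d"
        using nN norm_triangle_ineq2[of "N u" "N v"] norm_triangle_ineq2[of "N v" "N u"]
        unfolding nu_def by (auto simp: norm_minus_commute)
      have d120: "120 * d \<le> eps * nu" using d eps nu0 by simp
      have d120v: "120 * d \<le> eps * norm (N v)"
      proof -
        have "eps * (nu - 3 * d) \<le> eps * norm (N v)" using nv eps by (intro mult_left_mono) auto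
        moreover have "eps * (3 * d) \<le> 3 * d" using eps d by (simp add: mult_left_le_one_le)
        ultimately show ?thesis using d by (simp add: algebra_simps)
      qed
      obtain zu where zu: "norm zu \<le> norm (N u)" "zu \<in> FF Pm w l (norm (N u) * (eps/240)) (N u)"
        using slk by blast
      obtain zv where zv: "norm zv \<le> norm (N v)" "zv \<in> FF Pm w l (norm (N v) * (eps/240)) (N v)"
        using slk by blast
      obtain z' where z': "z' \<in> F v" "norm (z' - beta X Pm w l eps u) \<le> 240 * d / eps"
        using move[OF wn eps bin[of u, unfolded F_def] bnorm[of u] zu(2) zu(1) d(1) nN] d120
        unfolding F_def nu_def by blast
      obtain z'' where z'': "z'' \<in> F u" "norm (z'' - beta X Pm w l eps v) \<le> 240 * d / eps"
        using move[OF wn eps bin[of v, unfolded F_def] bnorm[of v] zv(2) zv(1) d(1), of "N u"] nN d120v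
        unfolding F_def by (auto simp: norm_minus_commute)
      have "eps * nu \<le> nu" using eps nu0 by (simp add: mult_left_le_one_le)
      then have d3: "3 * d \<le> nu" using d by linarith
      have R: "norm (beta X Pm w l eps u) \<le> 2 * nu" "norm (beta X Pm w l eps v) \<le> 2 * nu"
        using bnorm[of u] bnorm[of v] nv nu0 d3 unfolding nu_def by linarith+
      have "norm (beta X Pm w l eps u - beta X Pm w l eps v) \<le> 240 * d / eps + sqrt (4 * (240 * d / eps) * (2 * (2 * nu) + 240 * d / eps))"
        unfolding beq
        by (rule proj_stab) (use z' z'' R in \<open>auto simp: beq F_def FF_closed FF_convex\<close>)
      also have "\<dots> \<le> max 1200 (480 + 128 * sqrt nu) / eps * sqrt d"
        by (rule final_arith[OF eps nu0 d])
      finally show "norm (beta X Pm w l eps u - beta X Pm w l eps v) \<le> max 1200 (480 + 128 * sqrt nu) / eps * sqrt (norm (u - v))"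
        unfolding d_def .
    qed
  qed
qed

end
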